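(* Let $K_{m_1,m_2}$ be the complete bipartite graph with bipartition $(X,Y)$, $X=\{x_1,\dots,x_{m_1}\}$, $Y=\{y_1,\dots,y_{m_2}\}$, where $2\le m_1\le m_2$. Let $s$ and $i$ be integers with $\max\{1,s-m_2\}\le i\le \min\{m_1,s-1\}$, and let $S_i=\{x_1,\dots,x_i,y_1,\dots,y_{s-i}\}$. If $s\le m_2-m_1+2$, then $\kappa^*_{K_{m_1,m_2}}(S_i)=m_1$.
   Context: For $S\subseteq V(G)$ with $|S|\ge 2$, an $S$-Steiner tree of $G$ is a subtree $T$ of $G$ with $S\subseteq V(T)$ all of whose leaves belong to $S$. A family of $S$-Steiner trees $T_1,\dots,T_k$ is completely independent if for all $1\le p<q\le k$: $E(T_p)\cap E(T_q)=\emptyset$, $V(T_p)\cap V(T_q)=S$, and for any two vertices $x_1,x_2\in S$ the $(x_1,x_2)$-paths in $T_p$ and in $T_q$ are internally disjoint. $\kappa^*_G(S)$ is the maximum number of trees in a completely independent family of $S$-Steiner trees in $G$. *)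

theory Defs
  imports Main
begin

text \<open>Simple graphs are given by a vertex set V and an edge set E of 2-element subsets.\<close>

definition path_in :: "'a set set \<Rightarrow> 'a list \<Rightarrow> 'a \<Rightarrow> 'a \<Rightarrow> bool" where
  "path_in E P u v \<longleftrightarrow> P \<noteq> [] \<and> hd P = u \<and> last P = v \<and> distinct P \<and>
     (\<forall>j. Suc j < length P \<longrightarrow> {P ! j, P ! Suc j} \<in> E)"

definition is_cycle_in :: "'a set set \<Rightarrow> 'a list \<Rightarrow> bool" where
  "is_cycle_in E C \<longleftrightarrow> length C \<ge> 3 \<and> distinct C \<and>
     (\<forall>j. Suc j < length C \<longrightarrow> {C ! j, C ! Suc j} \<in> E) \<and> {last C, hd C} \<in> E"

definition is_tree :: "'a set \<Rightarrow> 'a set set \<Rightarrow> bool" where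
  "is_tree VT ET \<longleftrightarrow> finite VT \<and> VT \<noteq> {} \<and>
     (\<forall>e\<in>ET. \<exists>u v. e = {u, v} \<and> u \<noteq> v \<and> u \<in> VT \<and> v \<in> VT) \<and>
     (\<forall>u\<in>VT. \<forall>v\<in>VT. \<exists>P. path_in ET P u v) \<and>
     (\<nexists>C. is_cycle_in ET C)"

definition subtree_of :: "'a set \<Rightarrow> 'a set set \<Rightarrow> 'a set \<times> 'a set set \<Rightarrow> bool" where
  "subtree_of V E T \<longleftrightarrow> fst T \<subseteq> V \<and> snd T \<subseteq> E \<and> is_tree (fst T) (snd T)"

definition degree_in :: "'a set set \<Rightarrow> 'a \<Rightarrow> nat" where
  "degree_in E v = card {e \<in> E. v \<in> e}"

definition steiner_tree :: "'a set \<Rightarrow> 'a set set \<Rightarrow> 'a set \<Rightarrow> 'a set \<times> 'a set set \<Rightarrow> bool" where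
  "steiner_tree V E S T \<longleftrightarrow> subtree_of V E T \<and> S \<subseteq> fst T \<and>
     (\<forall>v\<in>fst T. degree_in (snd T) v = 1 \<longrightarrow> v \<in> S)"

definition completely_independent ::
  "'a set \<Rightarrow> 'a set set \<Rightarrow> 'a set \<Rightarrow> nat \<Rightarrow> (nat \<Rightarrow> 'a set \<times> 'a set set) \<Rightarrow> bool" where
  "completely_independent V E S k T \<longleftrightarrow>
     (\<forall>p<k. steiner_tree V E S (T p)) \<and>
     (\<forall>p q. p < q \<and> q < k \<longrightarrow>
        snd (T p) \<inter> snd (T q) = {} \<and>
        fst (T p) \<inter> fst (T q) = S \<and>
        (\<forall>x1\<in>S. \<forall>x2\<in>S. \<forall>P Q. path_in (snd (T p)) P x1 x2 \<longrightarrow> path_in (snd (T q)) Q x1 x2 \<longrightarrow>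
            set (butlast (tl P)) \<inter> set (butlast (tl Q)) = {}))"

definition kappa_star :: "'a set \<Rightarrow> 'a set set \<Rightarrow> 'a set \<Rightarrow> nat" where
  "kappa_star V E S = (GREATEST k. \<exists>T. completely_independent V E S k T)"

text \<open>Complete bipartite graph K_{m1,m2}: x_a = Inl a (1 \<le> a \<le> m1), y_b = Inr b (1 \<le> b \<le> m2).\<close>
definition Kbip_V :: "nat \<Rightarrow> nat \<Rightarrow> (nat + nat) set" where
  "Kbip_V m1 m2 = Inl ` {1..m1} \<union> Inr ` {1..m2}"

definition Kbip_E :: "nat \<Rightarrow> nat \<Rightarrow> (nat + nat) set set" where
  "Kbip_E m1 m2 = {{Inl a, Inr b} | a b. a \<in> {1..m1} \<and> b \<in> {1..m2}}"

definition S_set :: "nat \<Rightarrow> nat \<Rightarrow> (nat + nat) set" where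
  "S_set s i = Inl ` {1..i} \<union> Inr ` {1..s - i}"

end

theory Submission
  imports Defs "HOL-Library.Transitive_Closure_Table"
begin


lemma path_internal:
  assumes "path_in E P u v" "w \<in> set (butlast (tl P))"
  shows "\<exists>x y. x \<noteq> y \<and> {w,x} \<in> E \<and> {w,y} \<in> E"
proof -
  from assms(2) obtain k where k: "k < length (butlast (tl P))" "butlast (tl P) ! k = w"
    by (auto simp: in_set_conv_nth)
  have len: "Suc (Suc k) < length P" using k(1) by simp
  have w: "P ! Suc k = w" using k len
    by (simp add: nth_butlast nth_tl)
  have d: "distinct P" using assms(1) by (simp add: path_in_def)
  have e1: "{P ! k, P ! Suc k} \<in> E" and e2: "{P ! Suc k, P ! Suc (Suc k)} \<in> E"
    using assms(1) len by (auto simp: path_in_def)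
  have ne: "P ! k \<noteq> P ! Suc (Suc k)" using d len by (simp add: nth_eq_iff_index_eq)
  show ?thesis using e1 e2 ne w by (metis insert_commute)
qed

lemma no_cycle:
  assumes leaf: "\<And>v x y. v \<notin> {a,c} \<Longrightarrow> {v,x} \<in> E \<Longrightarrow> {v,y} \<in> E \<Longrightarrow> x = y"
  shows "\<not> is_cycle_in E C"
proof
  assume cy: "is_cycle_in E C"
  let ?n = "length C"
  have n: "?n \<ge> 3" and d: "distinct C" and ed: "\<And>j. Suc j < ?n \<Longrightarrow> {C ! j, C ! Suc j} \<in> E"
    and lh: "{last C, hd C} \<in> E" using cy by (auto simp: is_cycle_in_def)
  have "C \<noteq> []" using n by auto
  then have lastC: "last C = C ! (?n - 1)" by (simp add: last_conv_nth)
  have hdC: "hd C = C ! 0" using \<open>C \<noteq> []\<close> by (simp add: hd_conv_nth)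
  have neq: "\<And>p q. p < ?n \<Longrightarrow> q < ?n \<Longrightarrow> p \<noteq> q \<Longrightarrow> C ! p \<noteq> C ! q"
    using d by (simp add: nth_eq_iff_index_eq)
  have e01: "{C!0, C!1} \<in> E" and e12: "{C!1, C!2} \<in> E" using ed n by (auto simp: numeral_2_eq_2)
  have elast: "{C!(?n-1), C!0} \<in> E" using lh lastC hdC by simp
  have h1: "C!1 \<in> {a,c}"
  proof (rule ccontr)
    assume "C!1 \<notin> {a,c}"
    from leaf[OF this, of "C!0" "C!2"] e01 e12 have "C!0 = C!2" by (metis insert_commute)
    moreover have "C!0 \<noteq> C!2" by (rule neq) (use n in auto)
    ultimately show False by simp
  qed
  have h0: "C!0 \<in> {a,c}"
  proof (rule ccontr)
    assume "C!0 \<notin> {a,c}"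
    from leaf[OF this, of "C!1" "C!(?n-1)"] e01 elast have "C!1 = C!(?n-1)" by (metis insert_commute)
    moreover have "C!1 \<noteq> C!(?n-1)" by (rule neq) (use n in auto)
    ultimately show False by simp
  qed
  have h2: "C!2 \<in> {a,c}"
  proof (rule ccontr)
    assume nh: "C!2 \<notin> {a,c}"
    show False
    proof (cases "?n = 3")
      case True
      then have "{C!2, C!0} \<in> E" using elast by simp
      from leaf[OF nh, of "C!1" "C!0"] e12 this have "C!1 = C!0" by (metis insert_commute)
      moreover have "C!1 \<noteq> C!0" by (rule neq) (use n in auto)
      ultimately show False by simp
    next
      case False
      then have "{C!2, C!3} \<in> E" using ed[of 2] n by (simp add: numeral_3_eq_3 numeral_2_eq_2)
      from leaf[OF nh, of "C!1" "C!3"] e12 this have "C!1 = C!3" by (metis insert_commute)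
      moreover have "C!1 \<noteq> C!3" by (rule neq) (use n False in auto)
      ultimately show False by simp
    qed
  qed
  have "C!0 \<noteq> C!1" "C!0 \<noteq> C!2" "C!1 \<noteq> C!2" by (rule neq; use n in auto)+
  with h0 h1 h2 show False by auto
qed

lemma rpath_path:
  assumes "rtrancl_path (\<lambda>x y. {x,y} \<in> E) u xs v" "distinct (u # xs)"
  shows "path_in E (u # xs) u v"
proof -
  have "last (u # xs) = v"
    using assms(1) by (cases "xs = []") (auto elim: rtrancl_path.cases dest: rtrancl_path_last)
  moreover have "\<forall>j. Suc j < length (u#xs) \<longrightarrow> {(u#xs) ! j, (u#xs) ! Suc j} \<in> E"
    using rtrancl_path_nth[OF assms(1)] by auto
  ultimately show ?thesis using assms(2) by (simp add: path_in_def)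
qed

lemma connected_via:
  assumes "\<And>u. u \<in> VT \<Longrightarrow> (\<lambda>x y. {x,y} \<in> E)\<^sup>*\<^sup>* u a" "u \<in> VT" "v \<in> VT"
  shows "\<exists>P. path_in E P u v"
proof -
  let ?R = "\<lambda>x y. {x,y} \<in> E"
  have sym: "?R\<inverse>\<inverse> = ?R" by (auto simp: insert_commute fun_eq_iff)
  have "?R\<^sup>*\<^sup>* v a" using assms by auto
  then have "(?R\<inverse>\<inverse>)\<^sup>*\<^sup>* a v" by (rule rtranclp_converseI)
  then have "?R\<^sup>*\<^sup>* a v" using sym by simp
  with assms have "?R\<^sup>*\<^sup>* u v" by (meson rtranclp_trans)
  then obtain xs where "rtrancl_path ?R u xs v" by (auto simp: rtranclp_eq_rtrancl_path)
  then obtain xs' where "rtrancl_path ?R u xs' v" "distinct (u # xs')" by (rule rtrancl_path_distinct)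
  then show ?thesis using rpath_path by metis
qed



definition cix :: "nat \<Rightarrow> nat \<Rightarrow> nat \<Rightarrow> nat" where
  "cix s i p = (if i = 1 then (if p = 0 then 1 else s - i + p) else s - i + p + 1)"

definition hA :: "nat \<Rightarrow> nat + nat" where "hA p = Inl (Suc p)"
definition hC :: "nat \<Rightarrow> nat \<Rightarrow> nat \<Rightarrow> nat + nat" where "hC s i p = Inr (cix s i p)"

definition TE :: "nat \<Rightarrow> nat \<Rightarrow> nat \<Rightarrow> (nat + nat) set set" where
  "TE s i p = (\<lambda>y. {hA p, y}) ` (Inr ` {1..s-i} \<union> {hC s i p}) \<union>
              (\<lambda>x. {hC s i p, x}) ` (Inl ` {1..i} \<union> {hA p})"

definition TV :: "nat \<Rightarrow> nat \<Rightarrow> nat \<Rightarrow> (nat + nat) set" where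
  "TV s i p = S_set s i \<union> {hA p, hC s i p}"

context
  fixes m1 m2 s i :: nat
  assumes A: "2 \<le> m1" "1 \<le> i" "i \<le> m1" "i < s" "s + m1 \<le> m2 + 2"
begin

lemma cix_range: "p < m1 \<Longrightarrow> 1 \<le> cix s i p \<and> cix s i p \<le> m2"
  using A by (auto simp: cix_def)

lemma cix_big: "p < m1 \<Longrightarrow> \<not> (i = 1 \<and> p = 0) \<Longrightarrow> s - i < cix s i p"
  using A by (auto simp: cix_def)

lemma cix_special: "i = 1 \<Longrightarrow> cix s i 0 = 1"
  by (auto simp: cix_def)

lemma cix_inj: "p < q \<Longrightarrow> cix s i p \<noteq> cix s i q"
  using A by (auto simp: cix_def)

lemma TE_cases:
  assumes "e \<in> TE s i p"
  obtains \<alpha> \<beta> where "e = {Inl \<alpha>, Inr \<beta>}"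
    "(\<alpha> = Suc p \<and> (\<beta> \<in> {1..s-i} \<or> \<beta> = cix s i p)) \<or> (\<beta> = cix s i p \<and> (\<alpha> \<in> {1..i} \<or> \<alpha> = Suc p))"
proof -
  from assms consider (a) y where "y \<in> Inr ` {1..s-i} \<union> {hC s i p}" "e = {hA p, y}"
    | (b) x where "x \<in> Inl ` {1..i} \<union> {hA p}" "e = {hC s i p, x}"
    unfolding TE_def by blast
  then show ?thesis
  proof cases
    case a
    then show ?thesis
    proof (cases "y = hC s i p")
      case True
      then show ?thesis using a that[of "Suc p" "cix s i p"] unfolding hA_def hC_def by blast
    next
      case False
      then obtain b where "b \<in> {1..s-i}" "y = Inr b" using a by blast
      then show ?thesis using a that[of "Suc p" b] unfolding hA_def by blast
    qed
  next
    case b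
    then show ?thesis
    proof (cases "x = hA p")
      case True
      then show ?thesis using b that[of "Suc p" "cix s i p"] unfolding hA_def hC_def by (simp add: insert_commute)
    next
      case False
      then obtain a where "a \<in> {1..i}" "x = Inl a" using b by blast
      then show ?thesis using b that[of a "cix s i p"] unfolding hC_def by (simp add: insert_commute)
    qed
  qed
qed

lemma leaf_nb:
  assumes "v \<notin> {hA p, hC s i p}" "{v,x} \<in> TE s i p"
  shows "x = (case v of Inl _ \<Rightarrow> hC s i p | Inr _ \<Rightarrow> hA p)"
proof -
  obtain \<alpha> \<beta> where e: "{v,x} = {Inl \<alpha>, Inr \<beta>}"
    "(\<alpha> = Suc p \<and> (\<beta> \<in> {1..s-i} \<or> \<beta> = cix s i p)) \<or> (\<beta> = cix s i p \<and> (\<alpha> \<in> {1..i} \<or> \<alpha> = Suc p))"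
    using assms(2) by (rule TE_cases)
  have "(v = Inl \<alpha> \<and> x = Inr \<beta>) \<or> (v = Inr \<beta> \<and> x = Inl \<alpha>)"
    using e(1) by (auto simp: doubleton_eq_iff)
  then show ?thesis
  proof
    assume h: "v = Inl \<alpha> \<and> x = Inr \<beta>"
    then have "\<alpha> \<noteq> Suc p" using assms(1) by (auto simp: hA_def)
    then show ?thesis using h e(2) by (simp add: hC_def)
  next
    assume h: "v = Inr \<beta> \<and> x = Inl \<alpha>"
    then have "\<beta> \<noteq> cix s i p" using assms(1) by (auto simp: hC_def)
    then show ?thesis using h e(2) by (simp add: hA_def)
  qed
qed

lemma leaf:
  assumes "v \<notin> {hA p, hC s i p}" "{v,x} \<in> TE s i p" "{v,y} \<in> TE s i p"
  shows "x = y"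
  using leaf_nb[OF assms(1,2)] leaf_nb[OF assms(1,3)] by simp

lemma card_ne1: "finite B \<Longrightarrow> a \<in> B \<Longrightarrow> b \<in> B \<Longrightarrow> a \<noteq> b \<Longrightarrow> card B \<noteq> 1"
proof
  assume "finite B" "a \<in> B" "b \<in> B" "a \<noteq> b" "card B = 1"
  from \<open>card B = 1\<close> obtain x where "B = {x}" by (rule card_1_singletonE)
  with \<open>a \<in> B\<close> \<open>b \<in> B\<close> \<open>a \<noteq> b\<close> show False by auto
qed

lemma TE_finite: "finite (TE s i p)"
  unfolding TE_def by simp

lemma tree_ok:
  assumes p: "p < m1"
  shows "steiner_tree (Kbip_V m1 m2) (Kbip_E m1 m2) (S_set s i) (TV s i p, TE s i p)"
proof -
  have cr: "1 \<le> cix s i p" "cix s i p \<le> m2" using cix_range[OF p] by auto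
  have sm: "s - i \<le> m2" using A by auto
  have VT: "TV s i p \<subseteq> Kbip_V m1 m2"
    using cr p A sm unfolding TV_def Kbip_V_def S_set_def hA_def hC_def by auto
  have ET: "TE s i p \<subseteq> Kbip_E m1 m2"
  proof
    fix e assume "e \<in> TE s i p"
    then obtain \<alpha> \<beta> where e: "e = {Inl \<alpha>, Inr \<beta>}"
      "(\<alpha> = Suc p \<and> (\<beta> \<in> {1..s-i} \<or> \<beta> = cix s i p)) \<or> (\<beta> = cix s i p \<and> (\<alpha> \<in> {1..i} \<or> \<alpha> = Suc p))"
      by (rule TE_cases)
    then have "\<alpha> \<in> {1..m1}" "\<beta> \<in> {1..m2}" using cr p A sm by auto
    then show "e \<in> Kbip_E m1 m2" using e(1) unfolding Kbip_E_def by blast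
  qed
  have wf: "\<forall>e\<in>TE s i p. \<exists>u v. e = {u, v} \<and> u \<noteq> v \<and> u \<in> TV s i p \<and> v \<in> TV s i p"
  proof
    fix e assume "e \<in> TE s i p"
    then obtain \<alpha> \<beta> where e: "e = {Inl \<alpha>, Inr \<beta>}"
      "(\<alpha> = Suc p \<and> (\<beta> \<in> {1..s-i} \<or> \<beta> = cix s i p)) \<or> (\<beta> = cix s i p \<and> (\<alpha> \<in> {1..i} \<or> \<alpha> = Suc p))"
      by (rule TE_cases)
    have "Inl \<alpha> \<in> TV s i p" "Inr \<beta> \<in> TV s i p"
      using e(2) unfolding TV_def S_set_def hA_def hC_def by auto
    then show "\<exists>u v. e = {u, v} \<and> u \<noteq> v \<and> u \<in> TV s i p \<and> v \<in> TV s i p"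
      using e(1) by blast
  qed
  have reach: "(\<lambda>x y. {x,y} \<in> TE s i p)\<^sup>*\<^sup>* u (hA p)" if u: "u \<in> TV s i p" for u
  proof -
    let ?R = "\<lambda>x y. {x,y} \<in> TE s i p"
    have ca: "?R (hC s i p) (hA p)" unfolding TE_def by (auto simp: insert_commute)
    consider "u = hA p" | "u \<in> Inr ` {1..s-i} \<union> {hC s i p}" | "u \<in> Inl ` {1..i}"
      using u unfolding TV_def S_set_def by auto
    then show ?thesis
    proof cases
      case 1 then show ?thesis by simp
    next
      case 2 then have "?R u (hA p)" unfolding TE_def by (auto simp: insert_commute)
      then show ?thesis by (rule r_into_rtranclp)
    next
      case 3 then have "?R u (hC s i p)" unfolding TE_def by (auto simp: insert_commute)
      then show ?thesis using ca by (meson converse_rtranclp_into_rtranclp r_into_rtranclp)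
    qed
  qed
  have conn: "\<forall>u\<in>TV s i p. \<forall>v\<in>TV s i p. \<exists>P. path_in (TE s i p) P u v"
    using connected_via[OF reach] by blast
  have nc: "\<nexists>C. is_cycle_in (TE s i p) C"
    using no_cycle[of "hA p" "hC s i p" "TE s i p"] leaf by blast
  have tree: "is_tree (TV s i p) (TE s i p)"
    unfolding is_tree_def using wf conn nc by (auto simp: TV_def S_set_def)
  have deg: "v \<in> S_set s i" if v: "v \<in> TV s i p" "degree_in (TE s i p) v = 1" for v
  proof (rule ccontr)
    assume nS: "v \<notin> S_set s i"
    have fin: "finite {e \<in> TE s i p. v \<in> e}" using TE_finite by auto
    have "v = hA p \<or> v = hC s i p" using v nS unfolding TV_def by auto
    then show False
    proof
      assume vA: "v = hA p"
      then have "\<not> Suc p \<le> i" using nS unfolding S_set_def hA_def by auto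
      then have nsp: "\<not> (i = 1 \<and> p = 0)" using A by auto
      have e1: "{hA p, Inr 1} \<in> TE s i p" using A unfolding TE_def by auto
      have e2: "{hA p, hC s i p} \<in> TE s i p" unfolding TE_def by auto
      have "{hA p, Inr 1} \<noteq> {hA p, hC s i p}"
        using cix_big[OF p nsp] A unfolding hA_def hC_def by (auto simp: doubleton_eq_iff)
      then show False using card_ne1[OF fin, of "{hA p, Inr 1}" "{hA p, hC s i p}"] e1 e2 v vA
        unfolding degree_in_def by auto
    next
      assume vC: "v = hC s i p"
      then have nsp: "\<not> (i = 1 \<and> p = 0)" using nS cix_special A unfolding S_set_def hC_def by auto
      have e1: "{hC s i p, Inl 1} \<in> TE s i p" using A unfolding TE_def by auto
      show False
      proof (cases "p = 0")
        case True
        then have i2: "2 \<le> i" using nsp A by auto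
        have e2: "{hC s i p, Inl 2} \<in> TE s i p" using i2 unfolding TE_def by auto
        have "{hC s i p, Inl 1} \<noteq> {hC s i p, Inl 2}" unfolding hC_def by (auto simp: doubleton_eq_iff)
        then show False using card_ne1[OF fin, of "{hC s i p, Inl 1}" "{hC s i p, Inl 2}"] e1 e2 v vC
          unfolding degree_in_def by auto
      next
        case False
        have e2: "{hC s i p, hA p} \<in> TE s i p" unfolding TE_def by auto
        have "{hC s i p, Inl 1} \<noteq> {hC s i p, hA p}" using False unfolding hC_def hA_def by (auto simp: doubleton_eq_iff)
        then show False using card_ne1[OF fin, of "{hC s i p, Inl 1}" "{hC s i p, hA p}"] e1 e2 v vC
          unfolding degree_in_def by auto
      qed
    qed
  qed
  show ?thesis
    unfolding steiner_tree_def subtree_of_def using VT ET tree deg by (auto simp: TV_def)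
qed


lemma internal_hub:
  assumes "path_in (TE s i p) P u v" "w \<in> set (butlast (tl P))"
  shows "w \<in> {hA p, hC s i p}"
proof (rule ccontr)
  assume n: "w \<notin> {hA p, hC s i p}"
  obtain x y where "x \<noteq> y" "{w,x} \<in> TE s i p" "{w,y} \<in> TE s i p"
    using path_internal[OF assms] by blast
  with leaf[OF n] show False by blast
qed

lemma family:
  "completely_independent (Kbip_V m1 m2) (Kbip_E m1 m2) (S_set s i) m1 (\<lambda>p. (TV s i p, TE s i p))"
  unfolding completely_independent_def
proof (intro conjI allI impI)
  fix p assume "p < m1"
  then show "steiner_tree (Kbip_V m1 m2) (Kbip_E m1 m2) (S_set s i) (TV s i p, TE s i p)"
    by (rule tree_ok)
next
  fix p q assume pq: "p < q \<and> q < m1"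
  have nq: "\<not> (i = 1 \<and> q = 0)" using pq by auto
  have cq: "s - i < cix s i q" using cix_big[OF _ nq] pq by auto
  have cpq: "cix s i p \<noteq> cix s i q" using cix_inj pq by auto
  have cp: "cix s i p \<in> {1..s-i} \<Longrightarrow> i = 1 \<and> p = 0" using cix_big[of p] pq by force
  show "snd (TV s i p, TE s i p) \<inter> snd (TV s i q, TE s i q) = {}"
  proof (rule ccontr)
    assume "snd (TV s i p, TE s i p) \<inter> snd (TV s i q, TE s i q) \<noteq> {}"
    then obtain e where e1: "e \<in> TE s i p" and e2: "e \<in> TE s i q" by auto
    obtain \<alpha> \<beta> where a: "e = {Inl \<alpha>, Inr \<beta>}"
      "(\<alpha> = Suc p \<and> (\<beta> \<in> {1..s-i} \<or> \<beta> = cix s i p)) \<or> (\<beta> = cix s i p \<and> (\<alpha> \<in> {1..i} \<or> \<alpha> = Suc p))"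
      using e1 by (rule TE_cases)
    obtain \<alpha>' \<beta>' where b: "e = {Inl \<alpha>', Inr \<beta>'}"
      "(\<alpha>' = Suc q \<and> (\<beta>' \<in> {1..s-i} \<or> \<beta>' = cix s i q)) \<or> (\<beta>' = cix s i q \<and> (\<alpha>' \<in> {1..i} \<or> \<alpha>' = Suc q))"
      using e2 by (rule TE_cases)
    have "\<alpha>' = \<alpha>" "\<beta>' = \<beta>" using a(1) b(1) by (auto simp: doubleton_eq_iff)
    then show False using a(2) b(2) cq cpq cp pq by auto
  qed
  have hd: "{hA p, hC s i p} \<inter> {hA q, hC s i q} = {}"
    using pq cpq unfolding hA_def hC_def by auto
  then show "fst (TV s i p, TE s i p) \<inter> fst (TV s i q, TE s i q) = S_set s i"
    unfolding TV_def by auto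
  show "\<forall>x1\<in>S_set s i. \<forall>x2\<in>S_set s i. \<forall>P Q. path_in (snd (TV s i p, TE s i p)) P x1 x2 \<longrightarrow>
      path_in (snd (TV s i q, TE s i q)) Q x1 x2 \<longrightarrow> set (butlast (tl P)) \<inter> set (butlast (tl Q)) = {}"
    using internal_hub[of p] internal_hub[of q] hd by fastforce
qed

end

lemma upper:
  assumes ci: "completely_independent (Kbip_V m1 m2) (Kbip_E m1 m2) S k T"
    and y: "Inr 1 \<in> S" and x: "Inl 1 \<in> S"
  shows "k \<le> m1"
proof -
  have ex: "\<exists>\<alpha>. \<alpha> \<in> {1..m1} \<and> {Inr 1, Inl \<alpha>} \<in> snd (T p)" if p: "p < k" for p
  proof -
    have st: "steiner_tree (Kbip_V m1 m2) (Kbip_E m1 m2) S (T p)" using ci p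
      unfolding completely_independent_def by auto
    then have sub: "snd (T p) \<subseteq> Kbip_E m1 m2" and tr: "is_tree (fst (T p)) (snd (T p))"
      and Sf: "S \<subseteq> fst (T p)"
      unfolding steiner_tree_def subtree_of_def by auto
    obtain P where P: "path_in (snd (T p)) P (Inr 1) (Inl 1)"
      using tr Sf x y unfolding is_tree_def by blast
    have ne: "P \<noteq> []" and h: "hd P = Inr 1" and l: "last P = Inl 1"
      and ed: "\<And>j. Suc j < length P \<Longrightarrow> {P ! j, P ! Suc j} \<in> snd (T p)"
      using P unfolding path_in_def by auto
    have "length P \<noteq> 1"
    proof
      assume "length P = 1"
      then obtain z where "P = [z]" by (cases P) auto
      with h l show False by simp
    qed
    then have len: "Suc 0 < length P" using ne by (cases P) auto
    have P0: "P ! 0 = Inr 1" using h ne by (simp add: hd_conv_nth)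
    have e: "{Inr 1, P ! 1} \<in> snd (T p)" using ed[of 0] len P0 by simp
    then have "{Inr 1, P ! 1} \<in> Kbip_E m1 m2" using sub by auto
    then obtain a b where ab: "{Inr 1, P ! 1} = {Inl a, Inr b}" "a \<in> {1..m1}"
      unfolding Kbip_E_def by blast
    then have "P ! 1 = Inl a" by (auto simp: doubleton_eq_iff)
    then show ?thesis using e ab(2) by auto
  qed
  define f where "f p = (SOME \<alpha>. \<alpha> \<in> {1..m1} \<and> {Inr 1, Inl \<alpha>} \<in> snd (T p))" for p
  have f: "f p \<in> {1..m1} \<and> {Inr 1, Inl (f p)} \<in> snd (T p)" if "p < k" for p
    unfolding f_def using someI_ex[OF ex[OF that]] .
  have inj: "inj_on f {..<k}"
  proof (rule inj_onI)
    fix p q assume "p \<in> {..<k}" "q \<in> {..<k}" "f p = f q"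
    show "p = q"
    proof (rule ccontr)
      assume "p \<noteq> q"
      then consider "p < q" | "q < p" by linarith
      then show False
      proof cases
        case 1
        then have "snd (T p) \<inter> snd (T q) = {}" using ci \<open>q \<in> {..<k}\<close>
          unfolding completely_independent_def by auto
        then show False using f[of p] f[of q] \<open>f p = f q\<close> \<open>p \<in> {..<k}\<close> \<open>q \<in> {..<k}\<close> by auto
      next
        case 2
        then have "snd (T q) \<inter> snd (T p) = {}" using ci \<open>p \<in> {..<k}\<close>
          unfolding completely_independent_def by auto
        then show False using f[of p] f[of q] \<open>f p = f q\<close> \<open>p \<in> {..<k}\<close> \<open>q \<in> {..<k}\<close> by auto
      qed
    qed
  qed
  have "f ` {..<k} \<subseteq> {1..m1}" using f by auto
  from card_inj_on_le[OF inj this] show ?thesis by simp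
qed

theorem theorem3p5:
  fixes m1 m2 s i :: nat
  assumes "2 \<le> m1" and "m1 \<le> m2"
    and "1 \<le> i" and "int s - int m2 \<le> int i"
    and "i \<le> m1" and "int i \<le> int s - 1"
    and "int s \<le> int m2 - int m1 + 2"
  shows "kappa_star (Kbip_V m1 m2) (Kbip_E m1 m2) (S_set s i) = m1"
proof -
  have A: "2 \<le> m1" "1 \<le> i" "i \<le> m1" "i < s" "s + m1 \<le> m2 + 2" using assms by linarith+
  have y: "Inr 1 \<in> S_set s i" and x: "Inl 1 \<in> S_set s i"
    using A unfolding S_set_def by auto
  show ?thesis
    unfolding kappa_star_def
  proof (rule Greatest_equality)
    show "\<exists>T. completely_independent (Kbip_V m1 m2) (Kbip_E m1 m2) (S_set s i) m1 T"
      using family[OF A] by blast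
  next
    fix k assume "\<exists>T. completely_independent (Kbip_V m1 m2) (Kbip_E m1 m2) (S_set s i) k T"
    then show "k \<le> m1" using upper y x by blast
  qed
qed

end
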